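(* Under the standing assumptions, let $u\in X\setminus\{0\}$, $\zeta\in X^*\setminus\{0\}$ and $\lambda>0$. Then $u$ is a $p$-eigenvector of $J$ with subgradient $\zeta$ and eigenvalue $\lambda$ if and only if $\zeta$ is a $q$-eigenvector of $J^*$ with subgradient $u$ and eigenvalue $\mu=\lambda^{1-q}$.
   Context: Standing assumptions: $X$ is a real reflexive Banach space with dual $X^*$ and duality pairing $\langle\cdot,\cdot\rangle$; $\Gamma_0(X)$ is the class of proper, lower semi-continuous, convex functionals $X\to\mathbb{R}\cup\{+\infty\}$. Fix $1<p<\infty$ and $q=\frac{p}{p-1}$. Let $J\in\Gamma_0(X)$, and let $H\in\Gamma_0(X)$ be absolutely $p$-homogeneous ($H(tu)=|t|^pH(u)$) such that $|u|_H:=(pH(u))^{1/p}$ is a norm on $X$, so $H(u)=\frac1p|u|_H^p$. The dual norm is $|\zeta|_{H^*}=\sup_{u\ne0}\langle\zeta,u\rangle/|u|_H$, and $H^*(\zeta)=\frac1q|\zeta|_{H^*}^q$. The Fenchel conjugate is $J^*(\zeta)=\sup_{u\in X}\langle\zeta,u\rangle-J(u)$ and the subdifferential is $\partial J(u)=\{\zeta\in X^*:\ J(u)+\langle\zeta,v-u\rangle\le J(v)\ \forall v\in X\}$. Growth assumption: there is $c>0$ with $H(u)\le cJ(u)$ for all $u\in X$. The Rayleigh quotient is $R(u)=J(u)/H(u)$ for $u\ne0$ and the dual Rayleigh quotient is $R_*(\zeta)=J^*(\zeta)/H^*(\zeta)$ for $\zeta\ne0$. A $p$-eigenvector of $J$: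 $u\in X\setminus\{0\}$ with subgradient $\zeta\in\partial J(u)$ and eigenvalue $\lambda=R(u)\in\mathbb{R}$ such that $\zeta\in\lambda\,\partial H(u)$. A $q$-eigenvector of $J^*$: $\zeta\in X^*\setminus\{0\}$ with subgradient $u\in\partial J^*(\zeta)$ and eigenvalue $\mu=R_*(\zeta)\in\mathbb{R}$ such that $u\in\mu\,\partial H^*(\zeta)$. *)

theory Defs
  imports "HOL-Analysis.Analysis"
begin

text \<open>Model: X is a real Banach space (type 'a::banach); its dual X^* is the space of
bounded linear functionals bounded linear maps 'a to real; the pairing is blinfun_apply.\<close>

definition reflexive_space :: "'a::banach itself \<Rightarrow> bool" where
  "reflexive_space _ \<longleftrightarrow>
     (\<forall>\<phi> :: ('a \<Rightarrow>\<^sub>L real) \<Rightarrow>\<^sub>L real. \<exists>x::'a. \<forall>\<zeta>. blinfun_apply \<phi> \<zeta> = blinfun_apply \<zeta> x)"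

definition proper_fun :: "('a \<Rightarrow> ereal) \<Rightarrow> bool" where
  "proper_fun F \<longleftrightarrow> (\<forall>x. F x \<noteq> -\<infinity>) \<and> (\<exists>x. F x \<noteq> \<infinity>)"

definition lsc_fun :: "('a::topological_space \<Rightarrow> ereal) \<Rightarrow> bool" where
  "lsc_fun F \<longleftrightarrow> (\<forall>c::ereal. closed {x. F x \<le> c})"

definition convex_fun :: "('a::real_vector \<Rightarrow> ereal) \<Rightarrow> bool" where
  "convex_fun F \<longleftrightarrow> (\<forall>x y. \<forall>t::real. 0 \<le> t \<and> t \<le> 1 \<longrightarrow>
      F ((1 - t) *\<^sub>R x + t *\<^sub>R y) \<le> ereal (1 - t) * F x + ereal t * F y)"

definition Gamma0 :: "('a::real_normed_vector \<Rightarrow> ereal) \<Rightarrow> bool" where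
  "Gamma0 F \<longleftrightarrow> proper_fun F \<and> lsc_fun F \<and> convex_fun F"

definition fconj :: "('a::real_normed_vector \<Rightarrow> ereal) \<Rightarrow> ('a \<Rightarrow>\<^sub>L real) \<Rightarrow> ereal" where
  "fconj F \<zeta> = (SUP u. ereal (blinfun_apply \<zeta> u) - F u)"

definition subdiff :: "('a::real_normed_vector \<Rightarrow> ereal) \<Rightarrow> 'a \<Rightarrow> ('a \<Rightarrow>\<^sub>L real) set" where
  "subdiff F u = {\<zeta>. \<forall>v. F u + ereal (blinfun_apply \<zeta> (v - u)) \<le> F v}"

text \<open>Subdifferential of a functional on X^*, viewed (via reflexivity X^** = X) as a subset of X.\<close>
definition dsubdiff :: "(('a::real_normed_vector \<Rightarrow>\<^sub>L real) \<Rightarrow> ereal) \<Rightarrow> ('a \<Rightarrow>\<^sub>L real) \<Rightarrow> 'a set" where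
  "dsubdiff G \<zeta> = {u. \<forall>\<eta>. G \<zeta> + ereal (blinfun_apply (\<eta> - \<zeta>) u) \<le> G \<eta>}"

definition abs_p_homogeneous :: "real \<Rightarrow> ('a::real_vector \<Rightarrow> ereal) \<Rightarrow> bool" where
  "abs_p_homogeneous p H \<longleftrightarrow> (\<forall>t u. H (t *\<^sub>R u) = ereal (\<bar>t\<bar> powr p) * H u)"

definition Hnorm :: "real \<Rightarrow> ('a \<Rightarrow> ereal) \<Rightarrow> 'a \<Rightarrow> real" where
  "Hnorm p H u = (p * real_of_ereal (H u)) powr (1 / p)"

definition H_is_norm :: "real \<Rightarrow> ('a::real_vector \<Rightarrow> ereal) \<Rightarrow> bool" where
  "H_is_norm p H \<longleftrightarrow> (\<forall>u. H u \<noteq> \<infinity> \<and> H u \<noteq> -\<infinity> \<and> H u \<ge> 0)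
     \<and> (\<forall>u. Hnorm p H u = 0 \<longleftrightarrow> u = 0)
     \<and> (\<forall>u v. Hnorm p H (u + v) \<le> Hnorm p H u + Hnorm p H v)
     \<and> (\<forall>t u. Hnorm p H (t *\<^sub>R u) = \<bar>t\<bar> * Hnorm p H u)"

definition rayleigh :: "('a \<Rightarrow> ereal) \<Rightarrow> ('a \<Rightarrow> ereal) \<Rightarrow> 'a \<Rightarrow> ereal" where
  "rayleigh J H u = J u / H u"

definition dual_rayleigh :: "('a::real_normed_vector \<Rightarrow> ereal) \<Rightarrow> ('a \<Rightarrow> ereal) \<Rightarrow> ('a \<Rightarrow>\<^sub>L real) \<Rightarrow> ereal" where
  "dual_rayleigh J H \<zeta> = fconj J \<zeta> / fconj H \<zeta>"

definition p_eigenvector :: "('a::real_normed_vector \<Rightarrow> ereal) \<Rightarrow> ('a \<Rightarrow> ereal) \<Rightarrow> 'a \<Rightarrow> ('a \<Rightarrow>\<^sub>L real) \<Rightarrow> real \<Rightarrow> bool" where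
  "p_eigenvector J H u \<zeta> lam \<longleftrightarrow> u \<noteq> 0 \<and> \<zeta> \<in> subdiff J u \<and> rayleigh J H u = ereal lam
      \<and> \<zeta> \<in> (\<lambda>\<eta>. lam *\<^sub>R \<eta>) ` subdiff H u"

definition q_eigenvector :: "('a::real_normed_vector \<Rightarrow> ereal) \<Rightarrow> ('a \<Rightarrow> ereal) \<Rightarrow> ('a \<Rightarrow>\<^sub>L real) \<Rightarrow> 'a \<Rightarrow> real \<Rightarrow> bool" where
  "q_eigenvector J H \<zeta> u mu \<longleftrightarrow> \<zeta> \<noteq> 0 \<and> u \<in> dsubdiff (fconj J) \<zeta> \<and> dual_rayleigh J H \<zeta> = ereal mu
      \<and> u \<in> (\<lambda>v. mu *\<^sub>R v) ` dsubdiff (fconj H) \<zeta>"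

end

theory Submission
  imports Defs
begin


definition sublin :: "('a::real_vector \<Rightarrow> real) \<Rightarrow> bool" where
  "sublin q \<longleftrightarrow> (\<forall>x y. q (x + y) \<le> q x + q y) \<and> (\<forall>t x. 0 \<le> t \<longrightarrow> q (t *\<^sub>R x) = t * q x)"

lemma sublin_0: "sublin q \<Longrightarrow> q 0 = 0"
  unfolding sublin_def by (metis mult_zero_left order_refl scaleR_zero_left)

lemma sublin_lower: "sublin q \<Longrightarrow> - q (- x) \<le> q x"
proof -
  assume s: "sublin q"
  have "q (x + - x) \<le> q x + q (- x)" using s unfolding sublin_def by blast
  then show ?thesis using sublin_0[OF s] by simp
qed

lemma chain_inf_sublin:
  fixes p :: "'a::real_vector \<Rightarrow> real"
  assumes ne: "C \<noteq> {}" and CS: "\<And>q. q \<in> C \<Longrightarrow> sublin q \<and> (\<forall>x. q x \<le> p x)" and sp: "sublin p"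
    and ch: "\<And>q1 q2. q1 \<in> C \<Longrightarrow> q2 \<in> C \<Longrightarrow> (\<forall>x. q1 x \<le> q2 x) \<or> (\<forall>x. q2 x \<le> q1 x)"
  defines "m \<equiv> (\<lambda>x. Inf ((\<lambda>q. q x) ` C))"
  shows "sublin m" "\<And>q x. q \<in> C \<Longrightarrow> m x \<le> q x" "\<And>x. m x \<le> p x"
proof -
  have bdd: "bdd_below ((\<lambda>q. q x) ` C)" for x
  proof (rule bdd_belowI2)
    fix q assume "q \<in> C"
    then have "- p (- x) \<le> - q (- x)" "- q (- x) \<le> q x" using CS sublin_lower by fastforce+
    then show "- p (- x) \<le> q x" by linarith
  qed
  show low: "\<And>q x. q \<in> C \<Longrightarrow> m x \<le> q x" unfolding m_def using bdd by (simp add: cInf_lower)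
  show "\<And>x. m x \<le> p x" using low ne CS by (meson ex_in_conv order_trans)
  have glb: "(\<And>q. q \<in> C \<Longrightarrow> a \<le> q x) \<Longrightarrow> a \<le> m x" for a x
    unfolding m_def using ne by (simp add: cINF_greatest)
  have add: "m (x + y) \<le> m x + m y" for x y
  proof -
    have "m (x + y) - q1 y \<le> m x" if q1: "q1 \<in> C" for q1
    proof -
      have "m (x + y) - q1 y \<le> q2 x" if q2: "q2 \<in> C" for q2
      proof (cases "\<forall>z. q1 z \<le> q2 z")
        case True
        have "m (x+y) \<le> q1 (x + y)" using low q1 by blast
        also have "\<dots> \<le> q1 x + q1 y" using CS[OF q1] unfolding sublin_def by blast
        finally show ?thesis using True[rule_format, of x] by linarith
      next
        case False
        then have "\<forall>z. q2 z \<le> q1 z" using ch[OF q1 q2] by blast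
        have "m (x+y) \<le> q2 (x + y)" using low q2 by blast
        also have "\<dots> \<le> q2 x + q2 y" using CS[OF q2] unfolding sublin_def by blast
        finally show ?thesis using \<open>\<forall>z. q2 z \<le> q1 z\<close>[rule_format, of y] by linarith
      qed
      then show ?thesis using glb[of "m (x + y) - q1 y" x] by blast
    qed
    then have "m (x + y) - m x \<le> q1 y" if "q1 \<in> C" for q1 using that by force
    then have "m (x + y) - m x \<le> m y" using glb by blast
    then show ?thesis by linarith
  qed
  have hom: "m (t *\<^sub>R x) = t * m x" if t: "0 \<le> t" for t x
  proof (cases "t = 0")
    case True
    have "(\<lambda>q. q 0) ` C = (\<lambda>q. 0) ` C" using CS sublin_0 by (auto intro!: image_cong)
    then have "m 0 = 0" unfolding m_def using ne by (simp add: image_constant_conv)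
    then show ?thesis using True by simp
  next
    case False
    then have tp: "t > 0" using t by simp
    have "m (t *\<^sub>R x) / t \<le> m x"
    proof (rule glb)
      fix q assume q: "q \<in> C"
      have "m (t *\<^sub>R x) \<le> q (t *\<^sub>R x)" using low q by blast
      also have "\<dots> = t * q x" using CS[OF q] t unfolding sublin_def by blast
      finally show "m (t *\<^sub>R x) / t \<le> q x" using tp by (simp add: divide_le_eq mult.commute)
    qed
    moreover have "t * m x \<le> m (t *\<^sub>R x)"
    proof (rule glb)
      fix q assume q: "q \<in> C"
      have "t * m x \<le> t * q x" using low q tp by (simp add: mult_left_mono)
      also have "\<dots> = q (t *\<^sub>R x)" using CS[OF q] t unfolding sublin_def by simp
      finally show "t * m x \<le> q (t *\<^sub>R x)" .
    qed
    ultimately show ?thesis using tp by (simp add: divide_le_eq mult.commute)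
  qed
  show "sublin m" unfolding sublin_def using add hom by blast
qed

lemma minimal_sublin_additive:
  fixes q :: "'a::real_vector \<Rightarrow> real"
  assumes sq: "sublin q" and mn: "\<And>r. sublin r \<Longrightarrow> (\<forall>x. r x \<le> q x) \<Longrightarrow> r = q"
  shows "q (x + y) = q x + q y"
proof -
  define r where "r = (\<lambda>x. Inf ((\<lambda>t. q (x + t *\<^sub>R y) - t * q y) ` {0..}))"
  have qadd: "q (a + b) \<le> q a + q b" for a b using sq unfolding sublin_def by blast
  have qhom: "0 \<le> t \<Longrightarrow> q (t *\<^sub>R a) = t * q a" for t a using sq unfolding sublin_def by blast
  have bdd: "bdd_below ((\<lambda>t. q (x + t *\<^sub>R y) - t * q y) ` {0..})" for x
  proof (rule bdd_belowI2)
    fix t :: real assume "t \<in> {0..}"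
    then have t: "0 \<le> t" by simp
    have "q (t *\<^sub>R y) \<le> q (x + t *\<^sub>R y) + q (- x)" using qadd[of "x + t *\<^sub>R y" "- x"] by simp
    then show "- q (- x) \<le> q (x + t *\<^sub>R y) - t * q y" using qhom[OF t] by simp
  qed
  have low: "0 \<le> t \<Longrightarrow> r x \<le> q (x + t *\<^sub>R y) - t * q y" for x t
    unfolding r_def using bdd by (intro cInf_lower) auto
  have glb: "(\<And>t. 0 \<le> t \<Longrightarrow> a \<le> q (x + t *\<^sub>R y) - t * q y) \<Longrightarrow> a \<le> r x" for a x
    unfolding r_def by (rule cINF_greatest) auto
  have radd: "r (x1 + x2) \<le> r x1 + r x2" for x1 x2
  proof -
    have "r (x1 + x2) - (q (x2 + t2 *\<^sub>R y) - t2 * q y) \<le> r x1" if t2: "0 \<le> t2" for t2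
    proof (rule glb)
      fix t1 :: real assume t1: "0 \<le> t1"
      have "r (x1 + x2) \<le> q ((x1 + x2) + (t1 + t2) *\<^sub>R y) - (t1 + t2) * q y"
        using low t1 t2 by simp
      also have "(x1 + x2) + (t1 + t2) *\<^sub>R y = (x1 + t1 *\<^sub>R y) + (x2 + t2 *\<^sub>R y)"
        by (simp add: algebra_simps)
      finally show "r (x1 + x2) - (q (x2 + t2 *\<^sub>R y) - t2 * q y) \<le> q (x1 + t1 *\<^sub>R y) - t1 * q y"
        using qadd[of "x1 + t1 *\<^sub>R y" "x2 + t2 *\<^sub>R y"] by (simp add: algebra_simps)
    qed
    then have "r (x1 + x2) - r x1 \<le> q (x2 + t2 *\<^sub>R y) - t2 * q y" if "0 \<le> t2" for t2
      using that by force
    then have "r (x1 + x2) - r x1 \<le> r x2" by (rule glb)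
    then show ?thesis by linarith
  qed
  have rhom: "r (s *\<^sub>R x) = s * r x" if s0: "0 \<le> s" for s x
  proof (cases "s = 0")
    case True
    have "r 0 \<le> 0" using low[of 0 0] sublin_0[OF sq] by simp
    moreover have "0 \<le> r 0" by (rule glb) (simp add: qhom)
    ultimately show ?thesis using True by simp
  next
    case False
    then have sp: "s > 0" using s0 by simp
    have "r (s *\<^sub>R x) / s \<le> r x"
    proof (rule glb)
      fix t :: real assume t: "0 \<le> t"
      have "r (s *\<^sub>R x) \<le> q (s *\<^sub>R x + (s * t) *\<^sub>R y) - (s * t) * q y" using low t sp by simp
      also have "s *\<^sub>R x + (s * t) *\<^sub>R y = s *\<^sub>R (x + t *\<^sub>R y)" by (simp add: algebra_simps)
      also have "q (s *\<^sub>R (x + t *\<^sub>R y)) = s * q (x + t *\<^sub>R y)" using qhom s0 by blast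
      finally have "r (s *\<^sub>R x) \<le> s * (q (x + t *\<^sub>R y) - t * q y)" by (simp add: algebra_simps)
      then show "r (s *\<^sub>R x) / s \<le> q (x + t *\<^sub>R y) - t * q y" using sp by (simp add: divide_le_eq mult.commute)
    qed
    moreover have "s * r x \<le> r (s *\<^sub>R x)"
    proof (rule glb)
      fix t :: real assume t: "0 \<le> t"
      have "s * r x \<le> s * (q (x + (t / s) *\<^sub>R y) - (t / s) * q y)" using low[of "t / s" x] t sp
        by (simp add: mult_left_mono)
      also have "\<dots> = s * q (x + (t / s) *\<^sub>R y) - t * q y" using sp by (simp add: algebra_simps)
      also have "s * q (x + (t / s) *\<^sub>R y) = q (s *\<^sub>R (x + (t / s) *\<^sub>R y))" using qhom s0 by simp
      also have "s *\<^sub>R (x + (t / s) *\<^sub>R y) = s *\<^sub>R x + t *\<^sub>R y" using sp by (simp add: algebra_simps)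
      finally show "s * r x \<le> q (s *\<^sub>R x + t *\<^sub>R y) - t * q y" .
    qed
    ultimately show ?thesis using sp by (simp add: divide_le_eq mult.commute)
  qed
  have "sublin r" unfolding sublin_def using radd rhom by blast
  moreover have "\<forall>x. r x \<le> q x" using low[of 0] by simp
  ultimately have "r = q" by (rule mn)
  then have "q x \<le> q (x + y) - q y" using low[of 1 x] by simp
  then show ?thesis using qadd[of x y] by linarith
qed

lemma minimal_sublin_linear:
  fixes q :: "'a::real_vector \<Rightarrow> real"
  assumes sq: "sublin q" and mn: "\<And>r. sublin r \<Longrightarrow> (\<forall>x. r x \<le> q x) \<Longrightarrow> r = q"
  shows "linear q"
proof -
  have add: "q (x + y) = q x + q y" for x y by (rule minimal_sublin_additive[OF sq mn])
  have neg: "q (- x) = - q x" for x using add[of x "- x"] sublin_0[OF sq] by simp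
  have hom: "q (t *\<^sub>R x) = t * q x" for t x
  proof (cases "0 \<le> t")
    case True then show ?thesis using sq unfolding sublin_def by blast
  next
    case False
    then have "q ((- t) *\<^sub>R x) = (- t) * q x" using sq unfolding sublin_def by (meson linear not_le neg_0_le_iff_le)
    then show ?thesis using neg[of "(- t) *\<^sub>R x"] by simp
  qed
  show ?thesis by (rule linearI) (use add hom in auto)
qed

lemma sublin_dominates_linear:
  fixes p :: "'a::real_vector \<Rightarrow> real"
  assumes sp: "sublin p"
  shows "\<exists>f. linear f \<and> (\<forall>x. f x \<le> p x)"
proof -
  define A where "A = {q. sublin q \<and> (\<forall>x. q x \<le> p x)}"
  define P where "P = (\<lambda>a u :: 'a \<Rightarrow> real. \<forall>x. u x \<le> a x)"
  have po: "partial_order_on A (relation_of P A)"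
  proof (rule partial_order_on_relation_ofI)
    show "P a a" for a unfolding P_def by simp
    show "P a b \<Longrightarrow> P b c \<Longrightarrow> P a c" for a b c unfolding P_def by (meson order_trans)
    show "P a b \<Longrightarrow> P b a \<Longrightarrow> a = b" for a b unfolding P_def by (rule ext) (meson antisym)
  qed
  have "\<exists>m \<in> A. \<forall>a \<in> A. P m a \<longrightarrow> a = m"
  proof (rule predicate_Zorn[OF po])
    fix C assume C: "C \<in> Chains (relation_of P A)"
    then have CA: "C \<subseteq> A" by (rule Chains_relation_of)
    have ch: "P a b \<or> P b a" if "a \<in> C" "b \<in> C" for a b
      using C that unfolding Chains_def relation_of_def by auto
    show "\<exists>u \<in> A. \<forall>a \<in> C. P a u"
    proof (cases "C = {}")
      case True
      have "p \<in> A" using sp by (simp add: A_def)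
      then show ?thesis using True by blast
    next
      case False
      define m where "m \<equiv> (\<lambda>x. Inf ((\<lambda>q. q x) ` C))"
      have CS: "\<And>q. q \<in> C \<Longrightarrow> sublin q \<and> (\<forall>x. q x \<le> p x)" using CA by (auto simp: A_def)
      have ch': "\<And>q1 q2. q1 \<in> C \<Longrightarrow> q2 \<in> C \<Longrightarrow> (\<forall>x. q1 x \<le> q2 x) \<or> (\<forall>x. q2 x \<le> q1 x)"
        using ch unfolding P_def by blast
      have R1: "sublin m" unfolding m_def by (rule chain_inf_sublin(1)[OF False CS sp ch'])
      have R2: "\<And>q x. q \<in> C \<Longrightarrow> m x \<le> q x" unfolding m_def by (rule chain_inf_sublin(2)[OF False CS sp ch'])
      have R3: "\<And>x. m x \<le> p x" unfolding m_def by (rule chain_inf_sublin(3)[OF False CS sp ch'])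
      have "m \<in> A" unfolding A_def using R1 R3 by blast
      moreover have "\<forall>a \<in> C. P a m" unfolding P_def using R2 by blast
      ultimately show ?thesis by blast
    qed
  qed
  then obtain m where mA: "m \<in> A" and mn: "\<forall>a \<in> A. P m a \<longrightarrow> a = m" by blast
  have "linear m"
  proof (rule minimal_sublin_linear)
    show "sublin m" using mA by (simp add: A_def)
    fix r assume r1: "sublin r" and r2: "\<forall>x. r x \<le> m x"
    have "\<forall>x. m x \<le> p x" using mA by (simp add: A_def)
    then have "\<forall>x. r x \<le> p x" using r2 by (meson order_trans)
    then have "r \<in> A" using r1 by (simp add: A_def)
    moreover have "P m r" using r2 by (simp add: P_def)
    ultimately show "r = m" using mn by blast
  qed
  then show ?thesis using mA unfolding A_def by blast
qed



lemma separation: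
  fixes C :: "'b::real_normed_vector set"
  assumes cv: "convex C" and cl: "closed C" and zC: "z \<notin> C" and ne: "C \<noteq> {}"
  shows "\<exists>(f::'b \<Rightarrow> real) (d::real). bounded_linear f \<and> d > 0 \<and> (\<forall>c\<in>C. f z + d \<le> f c)"
proof -
  have "open (- C)" using cl by (simp add: open_Compl)
  then obtain d where d: "d > 0" "ball z d \<subseteq> - C" using zC open_contains_ball by blast
  have dC: "d \<le> norm (c - z)" if "c \<in> C" for c
  proof (rule ccontr)
    assume "\<not> d \<le> norm (c - z)"
    then have "c \<in> ball z d" by (simp add: dist_norm norm_minus_commute)
    then show False using d that by blast
  qed
  obtain c0 where c0: "c0 \<in> C" using ne by blast
  define g where "g = (\<lambda>x (sc :: real \<times> 'b). norm (x + fst sc *\<^sub>R (snd sc - z)) - fst sc * d)"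
  define p where "p = (\<lambda>x. Inf (g x ` ({0..} \<times> C)))"
  have bdd: "bdd_below (g x ` ({0..} \<times> C))" for x
  proof (rule bdd_belowI2)
    fix sc :: "real \<times> 'b" assume "sc \<in> {0..} \<times> C"
    then obtain s c where sc: "sc = (s, c)" "0 \<le> s" "c \<in> C" by auto
    have "s * d \<le> s * norm (c - z)" using dC[OF sc(3)] sc(2) by (simp add: mult_left_mono)
    also have "\<dots> = norm (s *\<^sub>R (c - z))" using sc(2) by simp
    also have "\<dots> \<le> norm x + norm (x + s *\<^sub>R (c - z))" by (metis add_diff_cancel_left' norm_triangle_ineq4 add.commute)
    finally show "- norm x \<le> g x sc" unfolding g_def sc by simp
  qed
  have low: "p x \<le> norm (x + s *\<^sub>R (c - z)) - s * d" if "0 \<le> s" "c \<in> C" for x s c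
  proof -
    have "(s, c) \<in> {0..} \<times> C" using that by simp
    then have "p x \<le> g x (s, c)" unfolding p_def using bdd[of x] by (intro cInf_lower) auto
    then show ?thesis by (simp add: g_def)
  qed
  have glb: "(\<And>s c. 0 \<le> s \<Longrightarrow> c \<in> C \<Longrightarrow> a \<le> norm (x + s *\<^sub>R (c - z)) - s * d) \<Longrightarrow> a \<le> p x" for a x
    unfolding p_def using ne by (intro cINF_greatest) (auto simp: g_def)
  have padd: "p (x1 + x2) \<le> p x1 + p x2" for x1 x2
  proof -
    have "p (x1 + x2) - (norm (x2 + s2 *\<^sub>R (c2 - z)) - s2 * d) \<le> p x1" if s2: "0 \<le> s2" "c2 \<in> C" for s2 :: real and c2
    proof (rule glb)
      fix s1 :: real and c1 assume s1: "0 \<le> s1" "c1 \<in> C"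
      have "p (x1 + x2) \<le> norm (x1 + s1 *\<^sub>R (c1 - z)) - s1 * d + (norm (x2 + s2 *\<^sub>R (c2 - z)) - s2 * d)"
      proof (cases "s1 + s2 = 0")
        case True
        then have "s1 = 0" "s2 = 0" using s1 s2 by auto
        then show ?thesis using low[of 0 c1 "x1 + x2"] s1 norm_triangle_ineq[of x1 x2] by simp
      next
        case False
        then have sp: "s1 + s2 > 0" using s1 s2 by simp
        define c where "c = (s1 / (s1 + s2)) *\<^sub>R c1 + (s2 / (s1 + s2)) *\<^sub>R c2"
        have "c \<in> C" unfolding c_def using sp s1 s2
          by (intro convexD[OF cv]) (auto simp: add_divide_distrib[symmetric])
        have eq0: "(s1 + s2) *\<^sub>R c = s1 *\<^sub>R c1 + s2 *\<^sub>R c2"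
          unfolding c_def using sp by (simp add: scaleR_add_right)
        have eq: "(s1 + s2) *\<^sub>R (c - z) = s1 *\<^sub>R (c1 - z) + s2 *\<^sub>R (c2 - z)"
          using eq0 by (simp add: scaleR_diff_right scaleR_add_left algebra_simps)
        have "p (x1 + x2) \<le> norm ((x1 + x2) + (s1 + s2) *\<^sub>R (c - z)) - (s1 + s2) * d"
          using low[OF _ \<open>c \<in> C\<close>] sp by simp
        also have "(x1 + x2) + (s1 + s2) *\<^sub>R (c - z) = (x1 + s1 *\<^sub>R (c1 - z)) + (x2 + s2 *\<^sub>R (c2 - z))"
          using eq by (simp add: algebra_simps)
        finally show ?thesis using norm_triangle_ineq[of "x1 + s1 *\<^sub>R (c1 - z)" "x2 + s2 *\<^sub>R (c2 - z)"]
          by (simp add: algebra_simps)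
      qed
      then show "p (x1 + x2) - (norm (x2 + s2 *\<^sub>R (c2 - z)) - s2 * d) \<le> norm (x1 + s1 *\<^sub>R (c1 - z)) - s1 * d"
        by simp
    qed
    then have "p (x1 + x2) - p x1 \<le> norm (x2 + s2 *\<^sub>R (c2 - z)) - s2 * d" if "0 \<le> s2" "c2 \<in> C" for s2 :: real and c2
      using that by force
    then have "p (x1 + x2) - p x1 \<le> p x2" by (rule glb)
    then show ?thesis by linarith
  qed
  have phom: "p (t *\<^sub>R x) = t * p x" if t0: "0 \<le> t" for t x
  proof (cases "t = 0")
    case True
    have "p 0 \<le> 0" using low[of 0 c0 0] c0 by simp
    moreover have "0 \<le> p 0"
    proof (rule glb)
      fix s :: real and c assume "0 \<le> s" "c \<in> C"
      then show "0 \<le> norm (0 + s *\<^sub>R (c - z)) - s * d" using dC[of c] by (simp add: mult_left_mono)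
    qed
    ultimately show ?thesis using True by simp
  next
    case False
    then have tp: "t > 0" using t0 by simp
    have "p (t *\<^sub>R x) / t \<le> p x"
    proof (rule glb)
      fix s :: real and c assume s: "0 \<le> s" "c \<in> C"
      have e: "t *\<^sub>R x + (t * s) *\<^sub>R (c - z) = t *\<^sub>R (x + s *\<^sub>R (c - z))" by (simp add: scaleR_add_right)
      have "p (t *\<^sub>R x) \<le> norm (t *\<^sub>R x + (t * s) *\<^sub>R (c - z)) - (t * s) * d" using low[of "t * s" c "t *\<^sub>R x"] s tp by simp
      also have "\<dots> = t * (norm (x + s *\<^sub>R (c - z)) - s * d)" unfolding e using tp by (simp add: right_diff_distrib)
      finally have "p (t *\<^sub>R x) \<le> t * (norm (x + s *\<^sub>R (c - z)) - s * d)" .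
      then show "p (t *\<^sub>R x) / t \<le> norm (x + s *\<^sub>R (c - z)) - s * d" using tp by (simp add: divide_le_eq mult.commute)
    qed
    moreover have "t * p x \<le> p (t *\<^sub>R x)"
    proof (rule glb)
      fix s :: real and c assume s: "0 \<le> s" "c \<in> C"
      have "t * p x \<le> t * (norm (x + (s / t) *\<^sub>R (c - z)) - (s / t) * d)" using low[of "s / t" c x] s tp
        by (simp add: mult_left_mono)
      also have "\<dots> = norm (t *\<^sub>R (x + (s / t) *\<^sub>R (c - z))) - s * d" using tp by (simp add: right_diff_distrib)
      also have "t *\<^sub>R (x + (s / t) *\<^sub>R (c - z)) = t *\<^sub>R x + s *\<^sub>R (c - z)" using tp by (simp add: scaleR_add_right)
      finally show "t * p x \<le> norm (t *\<^sub>R x + s *\<^sub>R (c - z)) - s * d" .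
    qed
    ultimately show ?thesis using tp by (simp add: divide_le_eq mult.commute)
  qed
  have "sublin p" unfolding sublin_def using padd phom by blast
  then obtain f where f: "linear f" "\<And>x. f x \<le> p x" using sublin_dominates_linear by blast
  have pn: "p x \<le> norm x" for x using low[of 0 c0 x] c0 by simp
  have "bounded_linear f"
  proof (rule bounded_linear_intro[where K = 1])
    show "f (x + y) = f x + f y" for x y using f(1) by (simp add: linear_add)
    show "f (r *\<^sub>R x) = r *\<^sub>R f x" for r x using f(1) by (simp add: linear_scale)
    show "norm (f x) \<le> norm x * 1" for x
    proof -
      have "f x \<le> norm x" using f(2) pn order_trans by blast
      moreover have "- f x \<le> norm x" using f(2)[of "- x"] pn[of "- x"] f(1) by (simp add: linear_neg)
      ultimately show ?thesis by simp
    qed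
  qed
  moreover have "f z + d \<le> f c" if "c \<in> C" for c
  proof -
    have "f (z - c) \<le> p (z - c)" by (rule f(2))
    also have "\<dots> \<le> norm ((z - c) + 1 *\<^sub>R (c - z)) - 1 * d" using low[of 1 c "z - c"] that by simp
    finally have "f (z - c) \<le> - d" by simp
    then show ?thesis using f(1) by (simp add: linear_diff)
  qed
  ultimately show ?thesis using d(1) by blast
qed



lemma epi_convex:
  fixes F :: "'a::real_normed_vector \<Rightarrow> ereal"
  assumes "convex_fun F"
  shows "convex {(y, s::real). F y \<le> ereal s}"
  unfolding convex_alt
proof (intro ballI allI impI)
  fix z1 z2 :: "'a \<times> real" and u :: real
  assume z1: "z1 \<in> {(y, s). F y \<le> ereal s}" and z2: "z2 \<in> {(y, s). F y \<le> ereal s}" and u: "0 \<le> u \<and> u \<le> 1"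
  obtain y1 s1 y2 s2 where e: "z1 = (y1, s1)" "z2 = (y2, s2)" by (metis surj_pair)
  have f1: "F y1 \<le> ereal s1" and f2: "F y2 \<le> ereal s2" using z1 z2 e by auto
  have "F ((1 - u) *\<^sub>R y1 + u *\<^sub>R y2) \<le> ereal (1 - u) * F y1 + ereal u * F y2"
    using assms u unfolding convex_fun_def by blast
  also have "\<dots> \<le> ereal (1 - u) * ereal s1 + ereal u * ereal s2"
  proof (rule add_mono)
    show "ereal (1 - u) * F y1 \<le> ereal (1 - u) * ereal s1" using u f1 by (intro ereal_mult_left_mono) auto
    show "ereal u * F y2 \<le> ereal u * ereal s2" using u f2 by (intro ereal_mult_left_mono) auto
  qed
  also have "\<dots> = ereal ((1 - u) * s1 + u * s2)" by simp
  finally show "(1 - u) *\<^sub>R z1 + u *\<^sub>R z2 \<in> {(y, s). F y \<le> ereal s}" using e by simp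
qed

lemma epi_closed:
  fixes F :: "'a::real_normed_vector \<Rightarrow> ereal"
  assumes lsc: "lsc_fun F"
  shows "closed {(y, s::real). F y \<le> ereal s}"
  unfolding closed_sequential_limits
proof (intro allI impI, elim conjE)
  fix z :: "nat \<Rightarrow> 'a \<times> real" and l
  assume zin: "\<forall>n. z n \<in> {(y, s). F y \<le> ereal s}" and lim: "z \<longlonglongrightarrow> l"
  obtain y s where l: "l = (y, s)" by (metis surj_pair)
  have ly: "(\<lambda>n. fst (z n)) \<longlonglongrightarrow> y" using tendsto_fst[OF lim] l by simp
  have ls: "(\<lambda>n. snd (z n)) \<longlonglongrightarrow> s" using tendsto_snd[OF lim] l by simp
  have "F y \<le> ereal s + ereal e" if e: "0 < e" for e
  proof -
    obtain N where N: "\<And>n. n \<ge> N \<Longrightarrow> dist (snd (z n)) s < e"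
      using ls e unfolding lim_sequentially by blast
    have "(\<lambda>n. fst (z (n + N))) \<longlonglongrightarrow> y" using LIMSEQ_ignore_initial_segment[OF ly] by simp
    moreover have "fst (z (n + N)) \<in> {x. F x \<le> ereal (s + e)}" for n
    proof -
      have "F (fst (z (n + N))) \<le> ereal (snd (z (n + N)))" using zin by (auto simp: case_prod_beta)
      moreover have "snd (z (n + N)) \<le> s + e" using N[of "n + N"] by (simp add: dist_real_def)
      ultimately have "F (fst (z (n + N))) \<le> ereal (s + e)" using order_trans ereal_less_eq(3) by blast
      then show ?thesis by simp
    qed
    moreover have "closed {x. F x \<le> ereal (s + e)}" using lsc unfolding lsc_fun_def by blast
    ultimately have "y \<in> {x. F x \<le> ereal (s + e)}" using closed_sequentially[of "{x. F x \<le> ereal (s + e)}" "\<lambda>n. fst (z (n + N))" y] by blast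
    then show ?thesis by simp
  qed
  then have "F y \<le> ereal s" by (rule ereal_le_epsilon2)
  then show "l \<in> {(y, s). F y \<le> ereal s}" using l by simp
qed


lemma fconj_ge: "ereal (blinfun_apply \<eta> y) - F y \<le> fconj F \<eta>"
  unfolding fconj_def by (rule SUP_upper) simp

lemma fconj_le: "(\<And>y. ereal (blinfun_apply \<eta> y) - F y \<le> c) \<Longrightarrow> fconj F \<eta> \<le> c"
  unfolding fconj_def by (rule SUP_least)

lemma sep_data:
  fixes F :: "'a::real_normed_vector \<Rightarrow> ereal"
  assumes G: "Gamma0 F" and rx: "ereal r < F x"
  shows "\<exists>\<phi>::'a \<Rightarrow>\<^sub>L real. \<exists>\<alpha> d. d > 0 \<and> \<alpha> \<ge> 0 \<and>
           (\<forall>y s. F y \<le> ereal s \<longrightarrow> \<phi> x + \<alpha> * r + d \<le> \<phi> y + \<alpha> * s)"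
proof -
  define E where "E = {(y, s::real). F y \<le> ereal s}"
  have cv: "convex E" unfolding E_def using G epi_convex unfolding Gamma0_def by blast
  have cl: "closed E" unfolding E_def using G epi_closed unfolding Gamma0_def by blast
  have nE: "(x, r) \<notin> E" using rx unfolding E_def by auto
  obtain x0 where x0: "F x0 \<noteq> \<infinity>" "F x0 \<noteq> -\<infinity>" using G unfolding Gamma0_def proper_fun_def by blast
  then obtain a where a: "F x0 = ereal a" by (cases "F x0") auto
  have "(x0, a) \<in> E" unfolding E_def using a by simp
  then have ne: "E \<noteq> {}" by blast
  obtain g :: "'a \<times> real \<Rightarrow> real" and d where g: "bounded_linear g" "d > 0" "\<forall>c\<in>E. g (x, r) + d \<le> g c"
    using separation[OF cv cl nE ne] by blast
  have lg: "linear g" using g(1) bounded_linear.linear by blast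
  define \<alpha> where "\<alpha> = g (0, 1)"
  have bl: "bounded_linear (\<lambda>y. g (y, 0))"
    using bounded_linear_compose[OF g(1) bounded_linear_Pair[OF bounded_linear_ident bounded_linear_zero]] by simp
  define \<phi> where "\<phi> = Blinfun (\<lambda>y. g (y, 0))"
  have \<phi>: "blinfun_apply \<phi> y = g (y, 0)" for y unfolding \<phi>_def using bounded_linear_Blinfun_apply[OF bl] by simp
  have gs: "g (y, s) = \<phi> y + \<alpha> * s" for y s
  proof -
    have "(y, s) = (y, 0) + s *\<^sub>R (0, 1)" by simp
    then have "g (y, s) = g ((y, 0) + s *\<^sub>R (0, 1))" by metis
    also have "\<dots> = g (y, 0) + s * g (0, 1)"
      using linear_add[OF lg, of "(y, 0)" "s *\<^sub>R (0, 1)"] linear_scale[OF lg, of s "(0, 1)"] by simp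
    finally show ?thesis using \<phi> \<alpha>_def by simp
  qed
  have key: "\<forall>y s. F y \<le> ereal s \<longrightarrow> \<phi> x + \<alpha> * r + d \<le> \<phi> y + \<alpha> * s"
  proof (intro allI impI)
    fix y s assume "F y \<le> ereal s"
    then have "(y, s) \<in> E" unfolding E_def by simp
    then have "g (x, r) + d \<le> g (y, s)" using g(3) by blast
    then show "\<phi> x + \<alpha> * r + d \<le> \<phi> y + \<alpha> * s" using gs by simp
  qed
  have "\<alpha> \<ge> 0"
  proof (rule ccontr)
    assume "\<not> \<alpha> \<ge> 0"
    then have an: "\<alpha> < 0" by simp
    define s where "s = max a ((\<phi> x0 - \<phi> x - \<alpha> * r - d) / (- \<alpha>) + 1)"
    have "F x0 \<le> ereal s" using a s_def by simp
    then have k: "\<phi> x + \<alpha> * r + d \<le> \<phi> x0 + \<alpha> * s" using key by blast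
    have "(\<phi> x0 - \<phi> x - \<alpha> * r - d) / (- \<alpha>) + 1 \<le> s" unfolding s_def by simp
    then have "((\<phi> x0 - \<phi> x - \<alpha> * r - d) / (- \<alpha>) + 1) * (- \<alpha>) \<le> s * (- \<alpha>)" using an
      by (intro mult_right_mono) auto
    moreover have "((\<phi> x0 - \<phi> x - \<alpha> * r - d) / (- \<alpha>) + 1) * (- \<alpha>) = (\<phi> x0 - \<phi> x - \<alpha> * r - d) + (- \<alpha>)"
      using an by (simp add: field_simps)
    ultimately have "(\<phi> x0 - \<phi> x - \<alpha> * r - d) + (- \<alpha>) \<le> (- \<alpha>) * s" by (simp add: mult.commute)
    then show False using k an by linarith
  qed
  then show ?thesis using key g(2) by blast
qed

lemma pos_case:
  fixes F :: "'a::real_normed_vector \<Rightarrow> ereal" and \<phi> :: "'a \<Rightarrow>\<^sub>L real"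
  assumes pr: "proper_fun F" and ap: "\<alpha> > 0" and dp: "d > 0"
    and key: "\<forall>y s. F y \<le> ereal s \<longrightarrow> \<phi> x + \<alpha> * r + d \<le> \<phi> y + \<alpha> * s"
  shows "\<exists>\<eta>::'a \<Rightarrow>\<^sub>L real. ereal r < ereal (blinfun_apply \<eta> x) - fconj F \<eta>"
proof -
  define \<eta> where "\<eta> = (- 1 / \<alpha>) *\<^sub>R \<phi>"
  have \<eta>: "blinfun_apply \<eta> y = - \<phi> y / \<alpha>" for y unfolding \<eta>_def by (simp add: scaleR_blinfun.rep_eq uminus_blinfun.rep_eq)
  have "fconj F \<eta> \<le> ereal (\<eta> x - r - d / \<alpha>)"
  proof (rule fconj_le)
    fix y
    show "ereal (\<eta> y) - F y \<le> ereal (\<eta> x - r - d / \<alpha>)"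
    proof (cases "F y")
      case (real s)
      then have "\<phi> x + \<alpha> * r + d \<le> \<phi> y + \<alpha> * s" using key by simp
      then have nn: "0 \<le> (\<phi> y + \<alpha> * s - (\<phi> x + \<alpha> * r + d)) / \<alpha>" using ap by simp
      have "(- \<phi> x / \<alpha> - r - d / \<alpha>) - (- \<phi> y / \<alpha> - s) = (\<phi> y + \<alpha> * s - (\<phi> x + \<alpha> * r + d)) / \<alpha>"
        using ap by (simp add: field_simps)
      then have "- \<phi> y / \<alpha> - s \<le> - \<phi> x / \<alpha> - r - d / \<alpha>" using nn by linarith
      then show ?thesis using real \<eta> by simp
    next
      case PInf then show ?thesis by simp
    next
      case MInf then show ?thesis using pr unfolding proper_fun_def by blast
    qed
  qed
  moreover have "d / \<alpha> > 0" using ap dp by simp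
  ultimately have "ereal r < ereal (\<eta> x) - fconj F \<eta>"
    by (cases "fconj F \<eta>") auto
  then show ?thesis by blast
qed


lemma fenchel_moreau:
  fixes F :: "'a::real_normed_vector \<Rightarrow> ereal"
  assumes G: "Gamma0 F" and rx: "ereal r < F x"
  shows "\<exists>\<eta>::'a \<Rightarrow>\<^sub>L real. ereal r < ereal (blinfun_apply \<eta> x) - fconj F \<eta>"
proof -
  have pr: "proper_fun F" using G unfolding Gamma0_def by blast
  obtain \<phi> :: "'a \<Rightarrow>\<^sub>L real" and \<alpha> d where sd: "d > 0" "\<alpha> \<ge> 0"
      "\<forall>y s. F y \<le> ereal s \<longrightarrow> \<phi> x + \<alpha> * r + d \<le> \<phi> y + \<alpha> * s"
    using sep_data[OF G rx] by blast
  show ?thesis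
  proof (cases "\<alpha> > 0")
    case True
    then show ?thesis using pos_case[OF pr True sd(1) sd(3)] by blast
  next
    case False
    then have a0: "\<alpha> = 0" using sd(2) by simp
    then have dom: "\<phi> x + d \<le> \<phi> y" if "F y \<le> ereal s" for y s using sd(3) that by auto
    obtain x0 where x0: "F x0 \<noteq> \<infinity>" "F x0 \<noteq> -\<infinity>" using pr unfolding proper_fun_def by blast
    then obtain a where a: "F x0 = ereal a" by (cases "F x0") auto
    have "ereal (a - 1) < F x0" using a by simp
    from sep_data[OF G this] obtain \<phi>' :: "'a \<Rightarrow>\<^sub>L real" and \<alpha>' d' where sd': "d' > 0" "\<alpha>' \<ge> 0"
      "\<forall>y s. F y \<le> ereal s \<longrightarrow> \<phi>' x0 + \<alpha>' * (a - 1) + d' \<le> \<phi>' y + \<alpha>' * s"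
      by blast
    have "\<phi>' x0 + \<alpha>' * (a - 1) + d' \<le> \<phi>' x0 + \<alpha>' * a" using sd'(3) a by simp
    then have "\<alpha>' > 0" using sd'(1) by (simp add: algebra_simps)
    from pos_case[OF pr this sd'(1) sd'(3)] obtain \<eta>0 :: "'a \<Rightarrow>\<^sub>L real"
      where e0: "ereal (a - 1) < ereal (\<eta>0 x0) - fconj F \<eta>0" by blast
    have "ereal (\<eta>0 x0) - F x0 \<le> fconj F \<eta>0" by (rule fconj_ge)
    then have lb: "ereal (\<eta>0 x0 - a) \<le> fconj F \<eta>0" using a by simp
    obtain b where b: "fconj F \<eta>0 = ereal b"
    proof (cases "fconj F \<eta>0")
      case (real c) then show ?thesis using that by blast
    next
      case PInf then show ?thesis using e0 by simp
    next
      case MInf then show ?thesis using lb by simp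
    qed
    define t where "t = max 0 ((r - \<eta>0 x + b) / d + 1)"
    have t0: "t \<ge> 0" unfolding t_def by simp
    define \<eta> where "\<eta> = \<eta>0 - t *\<^sub>R \<phi>"
    have \<eta>: "blinfun_apply \<eta> y = \<eta>0 y - t * \<phi> y" for y
      unfolding \<eta>_def by (simp add: minus_blinfun.rep_eq scaleR_blinfun.rep_eq)
    have "fconj F \<eta> \<le> ereal (b - t * (\<phi> x + d))"
    proof (rule fconj_le)
      fix y
      show "ereal (\<eta> y) - F y \<le> ereal (b - t * (\<phi> x + d))"
      proof (cases "F y")
        case (real s)
        have "ereal (\<eta>0 y) - F y \<le> fconj F \<eta>0" by (rule fconj_ge)
        then have 1: "\<eta>0 y - s \<le> b" using real b by simp
        have "\<phi> x + d \<le> \<phi> y" using dom[of y s] real by simp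
        then have 2: "t * (\<phi> x + d) \<le> t * \<phi> y" using t0 by (rule mult_left_mono)
        show ?thesis using 1 2 real \<eta> by simp
      next
        case PInf then show ?thesis by simp
      next
        case MInf then show ?thesis using pr unfolding proper_fun_def by blast
      qed
    qed
    moreover have "r < \<eta> x - (b - t * (\<phi> x + d))"
    proof -
      have "(r - \<eta>0 x + b) / d + 1 \<le> t" unfolding t_def by simp
      then have "((r - \<eta>0 x + b) / d + 1) * d \<le> t * d" using sd(1) by (intro mult_right_mono) auto
      moreover have "((r - \<eta>0 x + b) / d + 1) * d = r - \<eta>0 x + b + d" using sd(1) by (simp add: field_simps)
      ultimately have "r - \<eta>0 x + b + d \<le> t * d" by simp
      then show ?thesis using \<eta>[of x] sd(1) by (simp add: algebra_simps)
    qed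
    ultimately have "ereal r < ereal (\<eta> x) - fconj F \<eta>"
      by (cases "fconj F \<eta>") auto
    then show ?thesis by blast
  qed
qed



lemma euler:
  fixes \<eta> :: "'a::real_normed_vector \<Rightarrow>\<^sub>L real" and h :: "'a \<Rightarrow> real"
  assumes hom: "\<And>t v. h (t *\<^sub>R v) = \<bar>t\<bar> powr p * h v"
    and sd: "\<forall>x. \<eta> x - h x \<le> \<eta> u - h u"
  shows "\<eta> u = p * h u"
proof -
  define f where "f = (\<lambda>t::real. t * \<eta> u - t powr p * h u)"
  have der: "(f has_real_derivative (\<eta> u - p * 1 powr (p - 1) * h u)) (at 1)"
    unfolding f_def by (auto intro!: derivative_eq_intros)
  have "\<forall>y. \<bar>1 - y\<bar> < 1/2 \<longrightarrow> f y \<le> f 1"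
  proof (intro allI impI)
    fix y :: real assume "\<bar>1 - y\<bar> < 1/2"
    then have y: "y > 0" by (simp add: abs_if split: if_splits)
    have "\<eta> (y *\<^sub>R u) - h (y *\<^sub>R u) \<le> \<eta> u - h u" using sd by blast
    then show "f y \<le> f 1" unfolding f_def using y hom[of y u] by (simp add: blinfun.scaleR_right)
  qed
  then have "\<eta> u - p * 1 powr (p - 1) * h u = 0" by (intro DERIV_local_max[OF der, of "1/2"]) auto
  then show ?thesis by simp
qed

lemma sd_scale:
  fixes \<eta> :: "'a::real_normed_vector \<Rightarrow>\<^sub>L real" and h :: "'a \<Rightarrow> real"
  assumes hom: "\<And>t v. h (t *\<^sub>R v) = \<bar>t\<bar> powr p * h v"
    and sd: "\<forall>x. \<eta> x - h x \<le> \<eta> u - h u" and sp: "\<sigma> > 0"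
  shows "\<forall>x. (\<sigma> powr (p - 1) *\<^sub>R \<eta>) x - h x \<le> (\<sigma> powr (p - 1) *\<^sub>R \<eta>) (\<sigma> *\<^sub>R u) - h (\<sigma> *\<^sub>R u)"
proof
  fix x :: 'a
  define y where "y = (1 / \<sigma>) *\<^sub>R x"
  have xy: "x = \<sigma> *\<^sub>R y" unfolding y_def using sp by simp
  have pp: "\<sigma> powr (p - 1) * \<sigma> = \<sigma> powr p" using sp by (simp add: powr_diff)
  have e1: "(\<sigma> powr (p - 1) *\<^sub>R \<eta>) x - h x = \<sigma> powr p * (\<eta> y - h y)"
    unfolding xy using sp hom[of \<sigma> y] pp by (simp add: blinfun.scaleR_right scaleR_blinfun.rep_eq algebra_simps)
  have e2: "(\<sigma> powr (p - 1) *\<^sub>R \<eta>) (\<sigma> *\<^sub>R u) - h (\<sigma> *\<^sub>R u) = \<sigma> powr p * (\<eta> u - h u)"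
    using sp hom[of \<sigma> u] pp by (simp add: blinfun.scaleR_right scaleR_blinfun.rep_eq algebra_simps)
  have "\<sigma> powr p * (\<eta> y - h y) \<le> \<sigma> powr p * (\<eta> u - h u)" using sd sp by (intro mult_left_mono) auto
  then show "(\<sigma> powr (p - 1) *\<^sub>R \<eta>) x - h x \<le> (\<sigma> powr (p - 1) *\<^sub>R \<eta>) (\<sigma> *\<^sub>R u) - h (\<sigma> *\<^sub>R u)"
    using e1 e2 by simp
qed

lemma subdiff_fconj:
  assumes "\<zeta> \<in> subdiff F u" and "F u = ereal a"
  shows "fconj F \<zeta> = ereal (blinfun_apply \<zeta> u - a)"
proof (rule antisym)
  show "fconj F \<zeta> \<le> ereal (blinfun_apply \<zeta> u - a)"
  proof (rule fconj_le)
    fix v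
    have "F u + ereal (blinfun_apply \<zeta> (v - u)) \<le> F v" using assms(1) unfolding subdiff_def by blast
    then have "ereal (a + (\<zeta> v - \<zeta> u)) \<le> F v" using assms(2) by (simp add: blinfun.diff_right)
    then show "ereal (blinfun_apply \<zeta> v) - F v \<le> ereal (blinfun_apply \<zeta> u - a)"
      by (cases "F v") auto
  qed
  show "ereal (blinfun_apply \<zeta> u - a) \<le> fconj F \<zeta>" using fconj_ge[of \<zeta> u F] assms(2) by simp
qed

lemma fy_dsubdiff:
  assumes "fconj F \<zeta> = ereal c" and "F u = ereal a" and "c + a = blinfun_apply \<zeta> u"
  shows "u \<in> dsubdiff (fconj F) \<zeta>"
  unfolding dsubdiff_def
proof (intro CollectI allI)
  fix \<eta>
  have "ereal (blinfun_apply \<eta> u) - F u \<le> fconj F \<eta>" by (rule fconj_ge)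
  then show "fconj F \<zeta> + ereal (blinfun_apply (\<eta> - \<zeta>) u) \<le> fconj F \<eta>"
  proof -
    have eq: "c + (blinfun_apply \<eta> u - blinfun_apply \<zeta> u) = blinfun_apply \<eta> u - a" using assms(3) by simp
    have "fconj F \<zeta> + ereal (blinfun_apply (\<eta> - \<zeta>) u) = ereal (c + (blinfun_apply \<eta> u - blinfun_apply \<zeta> u))"
      using assms(1) by (simp add: minus_blinfun.rep_eq)
    also have "\<dots> = ereal (blinfun_apply \<eta> u - a)" by (simp only: eq)
    also have "\<dots> \<le> fconj F \<eta>" using \<open>ereal (blinfun_apply \<eta> u) - F u \<le> fconj F \<eta>\<close> assms(2) by simp
    finally show ?thesis .
  qed
qed

lemma dsubdiff_fm:
  fixes F :: "'a::real_normed_vector \<Rightarrow> ereal"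
  assumes G: "Gamma0 F" and c: "fconj F \<zeta> = ereal c" and u: "u \<in> dsubdiff (fconj F) \<zeta>"
  shows "F u = ereal (blinfun_apply \<zeta> u - c)" "\<zeta> \<in> subdiff F u"
proof -
  have "ereal (blinfun_apply \<zeta> u) - F u \<le> fconj F \<zeta>" by (rule fconj_ge)
  then have ge: "ereal (blinfun_apply \<zeta> u - c) \<le> F u" using c by (cases "F u") auto
  have le: "F u \<le> ereal (blinfun_apply \<zeta> u - c)"
  proof (rule ccontr)
    assume "\<not> F u \<le> ereal (blinfun_apply \<zeta> u - c)"
    then have "ereal (blinfun_apply \<zeta> u - c) < F u" by simp
    from fenchel_moreau[OF G this] obtain \<eta> :: "'a \<Rightarrow>\<^sub>L real"
      where e: "ereal (blinfun_apply \<zeta> u - c) < ereal (blinfun_apply \<eta> u) - fconj F \<eta>" by blast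
    have "fconj F \<zeta> + ereal (blinfun_apply (\<eta> - \<zeta>) u) \<le> fconj F \<eta>" using u unfolding dsubdiff_def by blast
    then have "ereal (c + (\<eta> u - \<zeta> u)) \<le> fconj F \<eta>" using c by (simp add: minus_blinfun.rep_eq)
    then show False using e by (cases "fconj F \<eta>") auto
  qed
  show Fu: "F u = ereal (blinfun_apply \<zeta> u - c)" using ge le by simp
  show "\<zeta> \<in> subdiff F u" unfolding subdiff_def
  proof (intro CollectI allI)
    fix v
    have "ereal (blinfun_apply \<zeta> v) - F v \<le> fconj F \<zeta>" by (rule fconj_ge)
    then have "ereal (\<zeta> v - c) \<le> F v" using c by (cases "F v") auto
    then show "F u + ereal (blinfun_apply \<zeta> (v - u)) \<le> F v" using Fu by (simp add: blinfun.diff_right)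
  qed
qed

lemma ereal_div_pos:
  fixes x y :: ereal
  assumes "x / y = ereal m" "m > 0" "y \<ge> 0"
  shows "\<exists>b. y = ereal b \<and> b > 0 \<and> x = ereal (m * b)"
  using assms by (cases x; cases y) (auto split: if_splits simp: field_simps)


theorem theorem2p1:
  fixes J H :: "'a::banach \<Rightarrow> ereal"
    and p q lam :: real and u :: 'a and \<zeta> :: "'a \<Rightarrow>\<^sub>L real"
  assumes "reflexive_space TYPE('a)"
    and "1 < p" and "q = p / (p - 1)"
    and "Gamma0 J" and "Gamma0 H"
    and "abs_p_homogeneous p H" and "H_is_norm p H"
    and "\<exists>c>0. \<forall>v. H v \<le> ereal c * J v"
    and "u \<noteq> 0" and "\<zeta> \<noteq> 0" and "lam > 0"
  shows "p_eigenvector J H u \<zeta> lam \<longleftrightarrow> q_eigenvector J H \<zeta> u (lam powr (1 - q))"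
proof -
  note p1 = assms(2) and qd = assms(3) and GJ = assms(4) and GH = assms(5)
  note u0 = assms(9) and z0 = assms(10) and lp = assms(11)
  define h where "h = (\<lambda>v. real_of_ereal (H v))"
  have Hfin0: "\<forall>v. H v \<noteq> \<infinity> \<and> H v \<noteq> -\<infinity> \<and> H v \<ge> 0" using assms(7) unfolding H_is_norm_def by (rule conjunct1)
  have Hfin: "H v \<noteq> \<infinity> \<and> H v \<noteq> -\<infinity> \<and> H v \<ge> 0" for v using Hfin0 by (rule spec)
  have Hh: "H v = ereal (h v)" for v
  proof -
    have "H v \<noteq> \<infinity>" "H v \<noteq> -\<infinity>" using Hfin[of v] by blast+
    then show ?thesis unfolding h_def by (cases "H v") simp_all
  qed
  have h0: "h v \<ge> 0" for v using Hfin[of v] Hh[of v] by simp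
  have hom: "h (t *\<^sub>R v) = \<bar>t\<bar> powr p * h v" for t v
  proof -
    have "H (t *\<^sub>R v) = ereal (\<bar>t\<bar> powr p) * H v" using assms(6) unfolding abs_p_homogeneous_def by blast
    then show ?thesis using Hh[of "t *\<^sub>R v"] Hh[of v] by simp
  qed
  have hpos: "h v > 0" if "v \<noteq> 0" for v
  proof -
    have "Hnorm p H v \<noteq> 0" using assms(7) that unfolding H_is_norm_def by blast
    then have "p * h v \<noteq> 0" unfolding Hnorm_def h_def by auto
    then show ?thesis using h0[of v] by (simp add: less_le)
  qed
  have hz: "h 0 = 0" using hom[of 0 0] p1 by simp
  have sd_iff: "\<eta> \<in> subdiff H v \<longleftrightarrow> (\<forall>x. \<eta> x - h x \<le> \<eta> v - h v)" for \<eta> v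
    unfolding subdiff_def using Hh by (auto simp: blinfun.diff_right algebra_simps)
  have E1: "(q - 1) * (p - 1) = 1" using p1 qd by (simp add: field_simps)
  have E2: "(q - 1) * p = q" using p1 qd by (simp add: field_simps)
  define \<mu> where "\<mu> = lam powr (1 - q)"
  have mp: "\<mu> > 0" unfolding \<mu>_def using lp by simp
  show ?thesis
  proof
    assume P: "p_eigenvector J H u \<zeta> lam"
    then have sJ: "\<zeta> \<in> subdiff J u" and ray: "J u / H u = ereal lam"
      and "\<zeta> \<in> (\<lambda>\<eta>. lam *\<^sub>R \<eta>) ` subdiff H u"
      unfolding p_eigenvector_def rayleigh_def by blast+
    then obtain \<eta> where ze: "\<zeta> = lam *\<^sub>R \<eta>" and eH: "\<eta> \<in> subdiff H u" by blast
    have sde: "\<forall>x. \<eta> x - h x \<le> \<eta> u - h u" using eH sd_iff by blast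
    have hu: "h u > 0" using hpos u0 by blast
    obtain b where "ereal (h u) = ereal b" "b > 0" "J u = ereal (lam * b)"
      using ereal_div_pos[of "J u" "H u" lam] ray lp Hh[of u] h0[of u] by auto
    then have Ju: "J u = ereal (lam * h u)" by simp
    have eu: "\<eta> u = p * h u" by (rule euler[OF hom sde])
    have zu: "\<zeta> u = lam * (p * h u)" using ze eu by (simp add: scaleR_blinfun.rep_eq)
    have fJ: "fconj J \<zeta> = ereal (\<zeta> u - lam * h u)" by (rule subdiff_fconj[OF sJ Ju])
    have DJ: "u \<in> dsubdiff (fconj J) \<zeta>" by (rule fy_dsubdiff[OF fJ Ju]) simp
    define \<sigma> where "\<sigma> = lam powr (q - 1)"
    have sp: "\<sigma> > 0" unfolding \<sigma>_def using lp by simp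
    have sp1: "\<sigma> powr (p - 1) = lam" unfolding \<sigma>_def using lp E1 by (simp add: powr_powr)
    have spp: "\<sigma> powr p = lam powr q" unfolding \<sigma>_def using lp E2 by (simp add: powr_powr)
    have ls: "lam * \<sigma> = lam powr q" unfolding \<sigma>_def using lp by (simp add: powr_add[symmetric] powr_mult_base)
    define v where "v = \<sigma> *\<^sub>R u"
    have sdv: "\<forall>x. \<zeta> x - h x \<le> \<zeta> v - h v"
      using sd_scale[OF hom sde sp] unfolding v_def sp1 ze by simp
    then have sHv: "\<zeta> \<in> subdiff H v" using sd_iff by blast
    have fH: "fconj H \<zeta> = ereal (\<zeta> v - h v)" by (rule subdiff_fconj[OF sHv Hh])
    have DH: "v \<in> dsubdiff (fconj H) \<zeta>" by (rule fy_dsubdiff[OF fH Hh]) simp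
    have zv: "\<zeta> v - h v = lam powr q * ((p - 1) * h u)"
    proof -
      have "\<zeta> v = lam * \<sigma> * (p * h u)" unfolding v_def using zu by (simp add: blinfun.scaleR_right)
      moreover have "h v = \<sigma> powr p * h u" unfolding v_def using hom sp by simp
      ultimately show ?thesis using ls spp by (simp add: algebra_simps)
    qed
    have "dual_rayleigh J H \<zeta> = ereal (lam * ((p - 1) * h u)) / ereal (lam powr q * ((p - 1) * h u))"
      unfolding dual_rayleigh_def fJ fH zv zu by (simp add: algebra_simps)
    also have "\<dots> = ereal (lam / lam powr q)" using hu p1 lp by (simp add: field_simps)
    also have "lam / lam powr q = \<mu>" unfolding \<mu>_def using lp by (simp add: powr_diff)
    finally have DR: "dual_rayleigh J H \<zeta> = ereal \<mu>" .
    have "\<mu> * \<sigma> = 1" unfolding \<mu>_def \<sigma>_def using lp by (simp add: powr_add[symmetric])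
    then have "u = \<mu> *\<^sub>R v" unfolding v_def by simp
    then have "u \<in> (\<lambda>v. \<mu> *\<^sub>R v) ` dsubdiff (fconj H) \<zeta>" using DH by blast
    then show "q_eigenvector J H \<zeta> u (lam powr (1 - q))"
      unfolding q_eigenvector_def \<mu>_def[symmetric] using z0 DJ DR by blast
  next
    assume Q: "q_eigenvector J H \<zeta> u (lam powr (1 - q))"
    then have DJ: "u \<in> dsubdiff (fconj J) \<zeta>" and DR: "fconj J \<zeta> / fconj H \<zeta> = ereal \<mu>"
      and "u \<in> (\<lambda>v. \<mu> *\<^sub>R v) ` dsubdiff (fconj H) \<zeta>"
      unfolding q_eigenvector_def dual_rayleigh_def \<mu>_def[symmetric] by blast+
    then obtain w where uw: "u = \<mu> *\<^sub>R w" and DH: "w \<in> dsubdiff (fconj H) \<zeta>" by blast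
    have "ereal (\<zeta> 0) - H 0 \<le> fconj H \<zeta>" by (rule fconj_ge)
    then have fH0: "0 \<le> fconj H \<zeta>" using Hh[of 0] hz by simp
    obtain b where b: "fconj H \<zeta> = ereal b" "b > 0" "fconj J \<zeta> = ereal (\<mu> * b)"
      using ereal_div_pos[OF DR mp fH0] by blast
    have Hw: "H w = ereal (\<zeta> w - b)" and sHw: "\<zeta> \<in> subdiff H w"
      using dsubdiff_fm[OF GH b(1) DH] by blast+
    have hw: "h w = \<zeta> w - b" using Hw Hh[of w] by simp
    have w0: "w \<noteq> 0" using u0 uw by auto
    have sdw: "\<forall>x. \<zeta> x - h x \<le> \<zeta> w - h w" using sHw sd_iff by blast
    have ew: "\<zeta> w = p * h w" by (rule euler[OF hom sdw])
    have hwp: "h w > 0" using hpos w0 by blast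
    have Ju: "J u = ereal (\<zeta> u - \<mu> * b)" and sJ: "\<zeta> \<in> subdiff J u"
      using dsubdiff_fm[OF GJ b(3) DJ] by blast+
    have zu: "\<zeta> u = \<mu> * \<zeta> w" using uw by (simp add: blinfun.scaleR_right)
    have "\<zeta> u - \<mu> * b = \<mu> * (\<zeta> w - b)" using zu by (simp add: right_diff_distrib)
    then have Ju': "J u = ereal (\<mu> * h w)" using Ju hw by simp
    have hu: "h u = \<mu> powr p * h w" using uw hom mp by simp
    have "rayleigh J H u = ereal (\<mu> * h w) / ereal (\<mu> powr p * h w)"
      unfolding rayleigh_def Ju' Hh[of u] hu ..
    also have "\<dots> = ereal (\<mu> / \<mu> powr p)" using hwp mp by (simp add: field_simps)
    also have "\<mu> / \<mu> powr p = lam"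
    proof -
      have "\<mu> / \<mu> powr p = \<mu> powr (1 - p)" using mp by (simp add: powr_diff)
      also have "\<dots> = lam powr ((1 - q) * (1 - p))" unfolding \<mu>_def using lp by (simp add: powr_powr)
      also have "(1 - q) * (1 - p) = 1" using E1 by (simp add: algebra_simps)
      finally show ?thesis using lp by simp
    qed
    finally have RR: "rayleigh J H u = ereal lam" .
    define \<eta> where "\<eta> = \<mu> powr (p - 1) *\<^sub>R \<zeta>"
    have "\<forall>x. \<eta> x - h x \<le> \<eta> u - h u" unfolding \<eta>_def uw by (rule sd_scale[OF hom sdw mp])
    then have eH: "\<eta> \<in> subdiff H u" using sd_iff by blast
    have "lam * \<mu> powr (p - 1) = 1"
    proof -
      have "\<mu> powr (p - 1) = lam powr ((1 - q) * (p - 1))" unfolding \<mu>_def using lp by (simp add: powr_powr)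
      also have "(1 - q) * (p - 1) = - 1" using E1 by (simp add: algebra_simps)
      finally show ?thesis using lp by (simp add: powr_minus field_simps)
    qed
    then have "\<zeta> = lam *\<^sub>R \<eta>" unfolding \<eta>_def by simp
    then have "\<zeta> \<in> (\<lambda>\<eta>. lam *\<^sub>R \<eta>) ` subdiff H u" using eH by blast
    then show "p_eigenvector J H u \<zeta> lam" unfolding p_eigenvector_def using u0 sJ RR by blast
  qed
qed


end
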